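(* Let $\mathcal{V}$ be a finite vocabulary with $|\mathcal{V}|\ge2$ and $p(\cdot\mid c)$ a fixed (temperature-scaled) next-token distribution over $\mathcal{V}$ for every context $c$; let $q(\cdot\mid x)$ be a sampling policy over responses. For a prompt $x=(x_1,\dots,x_L)$ with $L\ge2$ define the prompt entropy $V(x):=\frac{1}{L-1}\sum_{l=2}^{L}\mathcal{H}(p(\cdot\mid x_{<l}))$. For a response $y=(y_1,\dots,y_{T})$ define $U(x,y):=\frac1{T}\sum_{t=1}^{T}\mathcal{H}(p(\cdot\mid x,y_{<t}))$, let $U^*(x):=\mathbb{E}_{y\sim q(\cdot\mid x)}[U(x,y)]$, and let $\hat U(x):=\frac1n\sum_{r=1}^n U(x,y^{(r)})$ where $y^{(1)},\dots,y^{(n)}$ are i.i.d. from $q(\cdot\mid x)$. Let $x,x'$ be two prompts, and suppose there are real numbers $S_{\text{prompt}}(z),S_{\text{resp}}(z)$ for $z\in\{x,x'\}$ and constants $\delta\ge0$, $\epsilon\ge0$, $a>0$, $b\in\mathbb{R}$ such that for $z\in\{x,x'\}$: (i) $|V(z)-S_{\text{prompt}}(z)|\le\delta$ and $|U^*(z)-S_{\text{resp}}(z)|\le\delta$ (representation approximation); (ii) $|S_{\text{resp}}(z)-(aS_{\text{prompt}}(z)+b)|\le\epsilon$ (entropy propagation). Put $\Delta_V:=V(x)-V(x')$, $\Delta_U:=\hat U(x)-\hat U(x')$ and $\eta(\alpha):=\log|\mathcal{V}|\sqrt{\log(2/\alpha)/(2n)}$. Then for every $\alpha\in(0,1)$,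 with probability at least $1-2\alpha$, $$|\Delta_U-a\Delta_V|\le 2\epsilon+2(a+1)\delta+2\eta(\alpha),$$ and, in particular, if $|a\Delta_V|>2\epsilon+2(a+1)\delta+2\eta(\alpha)$, then with probability at least $1-2\alpha$, $$\operatorname{sign}(\hat U(x)-\hat U(x'))=\operatorname{sign}(V(x)-V(x')).$$
   Context: $\mathcal{H}(p)=-\sum_{v\in\mathcal{V}}p(v)\log p(v)$ is Shannon entropy (natural log); $x_{<l}$ is the prefix $(x_1,\dots,x_{l-1})$ and $(x,y_{<t})$ is the prompt followed by the first $t-1$ response tokens. $S_{\text{prompt}}$ and $S_{\text{resp}}$ are (in the paper) aggregated hidden-representation entropies of the prompt and of the response; for the statement they are any real numbers satisfying (i) and (ii). The probability is over the random rollouts used to form $\hat U(x)$ and $\hat U(x')$. *)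

theory Defs
  imports "HOL-Probability.Probability"
begin

definition entropy_pmf :: "'v::finite pmf \<Rightarrow> real" where
  "entropy_pmf P = - (\<Sum>v\<in>UNIV. pmf P v * ln (pmf P v))"

definition prompt_entropy :: "('v::finite list \<Rightarrow> 'v pmf) \<Rightarrow> 'v list \<Rightarrow> real" where
  "prompt_entropy p x =
     (1 / (real (length x) - 1)) * (\<Sum>l=2..length x. entropy_pmf (p (take (l - 1) x)))"

definition resp_entropy :: "('v::finite list \<Rightarrow> 'v pmf) \<Rightarrow> 'v list \<Rightarrow> 'v list \<Rightarrow> real" where
  "resp_entropy p x y =
     (1 / real (length y)) * (\<Sum>t=1..length y. entropy_pmf (p (x @ take (t - 1) y)))"

definition exp_resp_entropy ::
  "('v::finite list \<Rightarrow> 'v pmf) \<Rightarrow> ('v list \<Rightarrow> 'v list pmf) \<Rightarrow> 'v list \<Rightarrow> real" where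
  "exp_resp_entropy p q x = measure_pmf.expectation (q x) (\<lambda>y. resp_entropy p x y)"

definition emp_resp_entropy ::
  "('v::finite list \<Rightarrow> 'v pmf) \<Rightarrow> 'v list \<Rightarrow> 'v list list \<Rightarrow> real" where
  "emp_resp_entropy p x ys = (\<Sum>y\<leftarrow>ys. resp_entropy p x y) / real (length ys)"

end

theory Submission
  imports Defs
begin
lemma rep_conv:
  "replicate_pmf n P = map_pmf (\<lambda>g. map g [0..<n]) (Pi_pmf {..<n} d (\<lambda>_. P))"
proof (induction n)
  case 0
  then show ?case by (simp add: map_pmf_def bind_return_pmf)
next
  case (Suc n)
  have "replicate_pmf (Suc n) P = replicate_pmf (n + 1) P" by simp
  also have "\<dots> = do {xs \<leftarrow> replicate_pmf n P; ys \<leftarrow> replicate_pmf 1 P; return_pmf (xs @ ys)}"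
    by (rule replicate_pmf_distrib)
  also have "\<dots> = do {f \<leftarrow> Pi_pmf {..<n} d (\<lambda>_. P); y \<leftarrow> P; return_pmf (map f [0..<n] @ [y])}"
    by (simp add: Suc replicate_pmf_1 map_pmf_def bind_assoc_pmf bind_return_pmf)
  also have "\<dots> = do {y \<leftarrow> P; f \<leftarrow> Pi_pmf {..<n} d (\<lambda>_. P); return_pmf (map f [0..<n] @ [y])}"
    by (rule bind_commute_pmf)
  also have "\<dots> = map_pmf (\<lambda>g. map g [0..<Suc n]) (Pi_pmf (insert n {..<n}) d (\<lambda>_. P))"
    by (simp add: Pi_pmf_insert' map_pmf_def bind_assoc_pmf bind_return_pmf)
  also have "insert n {..<n} = {..<Suc n}" by auto
  finally show ?case .
qed



lemma hoeff_rep: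
  fixes P :: "'a pmf" and f :: "'a \<Rightarrow> real"
  assumes n: "n > 0" and c: "c > 0" and fb: "\<And>y. f y \<in> {0..c}" and e: "\<epsilon> \<ge> 0"
  shows "measure_pmf.prob (replicate_pmf n P)
     {ys. \<bar>sum_list (map f ys) / real n - measure_pmf.expectation P f\<bar> \<ge> \<epsilon>}
     \<le> 2 * exp (-2 * real n * \<epsilon>\<^sup>2 / c\<^sup>2)"
proof -
  define M where "M = Pi_pmf {..<n} undefined (\<lambda>_. P)"
  have comp0: "map_pmf (\<lambda>g. g i) M = P" if "i < n" for i
    unfolding M_def using that by (subst Pi_pmf_component) auto
  have E: "measure_pmf.expectation M (\<lambda>g. f (g 0)) = measure_pmf.expectation P f"
  proof -
    have "measure_pmf.expectation M (\<lambda>g. f (g 0)) = measure_pmf.expectation (map_pmf (\<lambda>g. g 0) M) f"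
      by simp
    also have "map_pmf (\<lambda>g. g 0) M = P" using comp0 n by auto
    finally show ?thesis .
  qed
  interpret H: Hoeffding_ineq_iid M "{..<n}" "\<lambda>i g. f (g i)" "\<lambda>g. f (g 0)" 0 c "measure_pmf.expectation P f"
  proof unfold_locales
    show "prob_space.indep_vars (measure_pmf M) (\<lambda>_. borel) (\<lambda>i g. f (g i)) {..<n}"
      unfolding M_def
      by (intro prob_space.indep_vars_compose2[OF _ indep_vars_Pi_pmf])
         (auto simp: measure_pmf.prob_space_axioms)
  next
    fix i assume i: "i \<in> {..<n}"
    have "distr (measure_pmf M) borel (\<lambda>g. f (g i)) = distr (measure_pmf (map_pmf (\<lambda>g. g i) M)) borel f"
      unfolding map_pmf_rep_eq by (subst distr_distr) (auto simp: o_def)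
    moreover have "distr (measure_pmf M) borel (\<lambda>g. f (g 0)) = distr (measure_pmf (map_pmf (\<lambda>g. g 0) M)) borel f"
      unfolding map_pmf_rep_eq by (subst distr_distr) (auto simp: o_def)
    ultimately show "distr (measure_pmf M) borel (\<lambda>g. f (g i)) = distr (measure_pmf M) borel (\<lambda>g. f (g 0))"
      using comp0 i n by auto
  next
    show "measure_pmf.expectation P f \<equiv> measure_pmf.expectation M (\<lambda>g. f (g 0))"
      using E by simp
  qed (use fb in auto)
  have ne: "{..<n} \<noteq> {}" using n by auto
  have main: "measure_pmf.prob M {g. \<bar>(\<Sum>i\<in>{..<n}. f (g i)) / real n - measure_pmf.expectation P f\<bar> \<ge> \<epsilon>}
     \<le> 2 * exp (-2 * real n * \<epsilon>\<^sup>2 / (c - 0)\<^sup>2)"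
    using H.Hoeffding_ineq_abs_ge'[OF e c ne] by simp
  have "replicate_pmf n P = map_pmf (\<lambda>g. map g [0..<n]) M"
    unfolding M_def by (rule rep_conv)
  moreover have "sum_list (map f (map g [0..<n])) = (\<Sum>i\<in>{..<n}. f (g i))" for g
    by (simp add: sum_list_sum_nth atLeast0LessThan)
  ultimately show ?thesis using main by simp
qed



lemma entropy_bounds:
  fixes P :: "'v::finite pmf"
  shows "0 \<le> entropy_pmf P \<and> entropy_pmf P \<le> ln (real CARD('v))"
proof
  have "(\<Sum>v\<in>UNIV. pmf P v * ln (pmf P v)) \<le> 0"
  proof (rule sum_nonpos)
    fix v
    have "pmf P v \<le> 1" by (rule pmf_le_1)
    show "pmf P v * ln (pmf P v) \<le> 0"
    proof (cases "pmf P v = 0")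
      case False
      hence "pmf P v > 0" using pmf_nonneg[of P v] by linarith
      hence "ln (pmf P v) \<le> 0" using \<open>pmf P v \<le> 1\<close> by simp
      thus ?thesis using \<open>pmf P v > 0\<close> by (simp add: mult_nonneg_nonpos)
    qed simp
  qed
  thus "0 \<le> entropy_pmf P" unfolding entropy_pmf_def by simp
next
  define N where "N = real CARD('v)"
  have N: "N > 0" unfolding N_def by simp
  have tm: "- (pmf P v * ln (pmf P v)) - pmf P v * ln N \<le> 1 / N - pmf P v" for v
  proof (cases "pmf P v = 0")
    case False
    hence p: "pmf P v > 0" using pmf_nonneg[of P v] by linarith
    have "- (pmf P v * ln (pmf P v)) - pmf P v * ln N = pmf P v * ln (1 / (N * pmf P v))"
      using p N by (simp add: ln_div ln_mult algebra_simps)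
    also have "\<dots> \<le> pmf P v * (1 / (N * pmf P v) - 1)"
      using p N by (intro mult_left_mono ln_le_minus_one) auto
    also have "\<dots> = 1 / N - pmf P v" using p N by (simp add: field_simps)
    finally show ?thesis .
  qed (use N in simp)
  have s1: "(\<Sum>v\<in>UNIV. pmf P v) = 1" by (rule sum_pmf_eq_1) auto
  have "(\<Sum>v\<in>UNIV. - (pmf P v * ln (pmf P v)) - pmf P v * ln N) \<le> (\<Sum>v\<in>UNIV. 1 / N - pmf P v)"
    by (rule sum_mono) (rule tm)
  also have "\<dots> = 0" using s1 N by (simp add: sum_subtractf N_def)
  finally have "(\<Sum>v\<in>UNIV. - (pmf P v * ln (pmf P v))) - (\<Sum>v\<in>UNIV. pmf P v) * ln N \<le> 0"
    by (simp add: sum_subtractf sum_distrib_right)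
  thus "entropy_pmf P \<le> ln (real CARD('v))"
    unfolding entropy_pmf_def N_def using s1 by (simp add: sum_negf)
qed

lemma resp_bounds:
  fixes p :: "'v::finite list \<Rightarrow> 'v pmf"
  shows "resp_entropy p x y \<in> {0..ln (real CARD('v))}"
proof (cases "length y = 0")
  case True
  have "ln (real CARD('v)) \<ge> 0" by simp
  then show ?thesis using True by (simp add: resp_entropy_def)
next
  case False
  define T where "T = length y"
  have T: "T > 0" using False T_def by simp
  let ?s = "(\<Sum>t=1..T. entropy_pmf (p (x @ take (t - 1) y)))"
  have "?s \<le> (\<Sum>t=1..T. ln (real CARD('v)))"
    by (rule sum_mono) (use entropy_bounds in blast)
  hence up: "?s \<le> real T * ln (real CARD('v))" by simp
  have lo: "?s \<ge> 0" by (rule sum_nonneg) (use entropy_bounds in blast)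
  have "resp_entropy p x y = ?s / real T" unfolding resp_entropy_def T_def by simp
  moreover have "?s / real T \<le> ln (real CARD('v))" using up T by (simp add: divide_le_eq mult.commute)
  moreover have "?s / real T \<ge> 0" using lo T by simp
  ultimately show ?thesis by simp
qed

lemma one_side:
  fixes p :: "'v::finite list \<Rightarrow> 'v pmf" and q :: "'v list \<Rightarrow> 'v list pmf"
  assumes vocab: "CARD('v) \<ge> 2" and n: "n \<ge> 1" and al: "0 < \<alpha>" "\<alpha> < 1"
  shows "measure_pmf.prob (replicate_pmf n (q z))
     {ys. ln (real CARD('v)) * sqrt (ln (2 / \<alpha>) / (2 * real n)) \<le> \<bar>emp_resp_entropy p z ys - exp_resp_entropy p q z\<bar>} \<le> \<alpha>"
proof -
  define c where "c = ln (real CARD('v))"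
  define \<eta> where "\<eta> = c * sqrt (ln (2 / \<alpha>) / (2 * real n))"
  have c: "c > 0" unfolding c_def using vocab by simp
  have l: "ln (2 / \<alpha>) > 0" using al by simp
  have e: "\<eta> \<ge> 0" unfolding \<eta>_def using c l by simp
  have n0: "n > 0" using n by simp
  have len: "pmf (replicate_pmf n (q z)) ys = 0" if "length ys \<noteq> n" for ys
    using that set_replicate_pmf[of n "q z"] set_pmf_iff[of ys "replicate_pmf n (q z)"] by auto
  have "measure_pmf.prob (replicate_pmf n (q z))
     {ys. \<eta> \<le> \<bar>emp_resp_entropy p z ys - exp_resp_entropy p q z\<bar>}
     = measure_pmf.prob (replicate_pmf n (q z))
     {ys. \<eta> \<le> \<bar>sum_list (map (resp_entropy p z) ys) / real n - measure_pmf.expectation (q z) (resp_entropy p z)\<bar>}"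
    by (rule measure_prob_cong_0) (auto simp: emp_resp_entropy_def exp_resp_entropy_def intro!: len)
  also have "\<dots> \<le> 2 * exp (-2 * real n * \<eta>\<^sup>2 / c\<^sup>2)"
    by (rule hoeff_rep[OF n0 c _ e]) (use resp_bounds c_def in blast)
  also have "-2 * real n * \<eta>\<^sup>2 / c\<^sup>2 = - ln (2 / \<alpha>)"
    unfolding \<eta>_def using c l n0 by (simp add: power_mult_distrib)
  also have "2 * exp (- ln (2 / \<alpha>)) = \<alpha>"
    using al by (simp add: exp_minus)
  finally show ?thesis unfolding \<eta>_def c_def .
qed

theorem theorem1:
  fixes p :: "'v::finite list \<Rightarrow> 'v pmf"
    and q :: "'v list \<Rightarrow> 'v list pmf"
    and x x' :: "'v list"
    and n :: nat
    and Sp Sr Sp' Sr' \<delta> \<epsilon> a b :: real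
  assumes vocab: "CARD('v) \<ge> 2"
    and len_x: "length x \<ge> 2" and len_x': "length x' \<ge> 2"
    and n_pos: "n \<ge> 1"
    and \<delta>_nonneg: "\<delta> \<ge> 0" and \<epsilon>_nonneg: "\<epsilon> \<ge> 0" and a_pos: "a > 0"
    and approx_prompt_x: "\<bar>prompt_entropy p x - Sp\<bar> \<le> \<delta>"
    and approx_resp_x: "\<bar>exp_resp_entropy p q x - Sr\<bar> \<le> \<delta>"
    and approx_prompt_x': "\<bar>prompt_entropy p x' - Sp'\<bar> \<le> \<delta>"
    and approx_resp_x': "\<bar>exp_resp_entropy p q x' - Sr'\<bar> \<le> \<delta>"
    and prop_x: "\<bar>Sr - (a * Sp + b)\<bar> \<le> \<epsilon>"
    and prop_x': "\<bar>Sr' - (a * Sp' + b)\<bar> \<le> \<epsilon>"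
  shows "\<forall>\<alpha>::real. 0 < \<alpha> \<and> \<alpha> < 1 \<longrightarrow>
    (let \<eta> = ln (real CARD('v)) * sqrt (ln (2 / \<alpha>) / (2 * real n));
         bound = 2 * \<epsilon> + 2 * (a + 1) * \<delta> + 2 * \<eta>;
         \<Delta>V = prompt_entropy p x - prompt_entropy p x';
         R = pair_pmf (replicate_pmf n (q x)) (replicate_pmf n (q x'))
     in measure_pmf.prob R
          {(ys, ys'). \<bar>(emp_resp_entropy p x ys - emp_resp_entropy p x' ys') - a * \<Delta>V\<bar> \<le> bound}
          \<ge> 1 - 2 * \<alpha>
      \<and> (\<bar>a * \<Delta>V\<bar> > bound \<longrightarrow>
          measure_pmf.prob R
            {(ys, ys'). sgn (emp_resp_entropy p x ys - emp_resp_entropy p x' ys') = sgn \<Delta>V}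
            \<ge> 1 - 2 * \<alpha>))"
proof (intro allI impI)
  fix \<alpha> :: real
  assume al: "0 < \<alpha> \<and> \<alpha> < 1"
  define \<eta> where "\<eta> = ln (real CARD('v)) * sqrt (ln (2 / \<alpha>) / (2 * real n))"
  define bound where "bound = 2 * \<epsilon> + 2 * (a + 1) * \<delta> + 2 * \<eta>"
  define DV where "DV = prompt_entropy p x - prompt_entropy p x'"
  define R where "R = pair_pmf (replicate_pmf n (q x)) (replicate_pmf n (q x'))"
  define Ux where "Ux = exp_resp_entropy p q x"
  define Ux' where "Ux' = exp_resp_entropy p q x'"
  define Vx where "Vx = prompt_entropy p x"
  define Vx' where "Vx' = prompt_entropy p x'"
  have eta0: "\<eta> \<ge> 0" unfolding \<eta>_def using vocab al by simp
  define B1 where "B1 = {(ys::'v list list, ys'::'v list list). \<eta> \<le> \<bar>emp_resp_entropy p x ys - Ux\<bar>}"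
  define B2 where "B2 = {(ys::'v list list, ys'::'v list list). \<eta> \<le> \<bar>emp_resp_entropy p x' ys' - Ux'\<bar>}"
  have "B1 = fst -` {ys. \<eta> \<le> \<bar>emp_resp_entropy p x ys - Ux\<bar>}" unfolding B1_def by auto
  hence "measure_pmf.prob R B1 = measure_pmf.prob (map_pmf fst R) {ys. \<eta> \<le> \<bar>emp_resp_entropy p x ys - Ux\<bar>}"
    by simp
  also have "\<dots> \<le> \<alpha>" unfolding R_def map_fst_pair_pmf \<eta>_def Ux_def
    by (rule one_side[OF vocab n_pos]) (use al in auto)
  finally have P1: "measure_pmf.prob R B1 \<le> \<alpha>" .
  have "B2 = snd -` {ys. \<eta> \<le> \<bar>emp_resp_entropy p x' ys - Ux'\<bar>}" unfolding B2_def by auto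
  hence "measure_pmf.prob R B2 = measure_pmf.prob (map_pmf snd R) {ys. \<eta> \<le> \<bar>emp_resp_entropy p x' ys - Ux'\<bar>}"
    by simp
  also have "\<dots> \<le> \<alpha>" unfolding R_def map_snd_pair_pmf \<eta>_def Ux'_def
    by (rule one_side[OF vocab n_pos]) (use al in auto)
  finally have P2: "measure_pmf.prob R B2 \<le> \<alpha>" .
  define G where "G = UNIV - (B1 \<union> B2)"
  have "measure_pmf.prob R G = 1 - measure_pmf.prob R (B1 \<union> B2)"
    unfolding G_def using measure_pmf.prob_compl[of "B1 \<union> B2" R] by simp
  moreover have "measure_pmf.prob R (B1 \<union> B2) \<le> measure_pmf.prob R B1 + measure_pmf.prob R B2"
    by (rule measure_subadditive) (auto simp: measure_pmf.emeasure_eq_measure)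
  ultimately have PG: "measure_pmf.prob R G \<ge> 1 - 2 * \<alpha>" using P1 P2 by linarith
  have ha: "\<bar>a * Vx - a * Sp\<bar> \<le> a * \<delta>"
    using approx_prompt_x a_pos unfolding Vx_def
    by (simp add: abs_mult right_diff_distrib[symmetric] mult_left_mono)
  have ha': "\<bar>a * Vx' - a * Sp'\<bar> \<le> a * \<delta>"
    using approx_prompt_x' a_pos unfolding Vx'_def
    by (simp add: abs_mult right_diff_distrib[symmetric] mult_left_mono)
  have key: "\<bar>(emp_resp_entropy p x ys - emp_resp_entropy p x' ys') - a * DV\<bar> \<le> bound"
    if "(ys, ys') \<in> G" for ys ys'
  proof -
    have g1: "\<bar>emp_resp_entropy p x ys - Ux\<bar> < \<eta>" and g2: "\<bar>emp_resp_entropy p x' ys' - Ux'\<bar> < \<eta>"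
      using that unfolding G_def B1_def B2_def by auto
    show ?thesis
      using g1 g2 ha ha' approx_resp_x approx_resp_x' prop_x prop_x'
      unfolding bound_def DV_def Vx_def[symmetric] Vx'_def[symmetric] Ux_def[symmetric] Ux'_def[symmetric]
        abs_le_iff abs_less_iff
      by (simp add: algebra_simps)
  qed
  have bnd0: "bound \<ge> 0" unfolding bound_def using eta0 \<delta>_nonneg \<epsilon>_nonneg a_pos by simp
  have part1: "measure_pmf.prob R
          {(ys, ys'). \<bar>(emp_resp_entropy p x ys - emp_resp_entropy p x' ys') - a * DV\<bar> \<le> bound}
          \<ge> 1 - 2 * \<alpha>"
  proof -
    have "measure_pmf.prob R G \<le> measure_pmf.prob R
          {(ys, ys'). \<bar>(emp_resp_entropy p x ys - emp_resp_entropy p x' ys') - a * DV\<bar> \<le> bound}"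
      by (rule measure_pmf.finite_measure_mono) (use key in auto)
    thus ?thesis using PG by linarith
  qed
  have part2: "measure_pmf.prob R
            {(ys, ys'). sgn (emp_resp_entropy p x ys - emp_resp_entropy p x' ys') = sgn DV}
            \<ge> 1 - 2 * \<alpha>" if big: "\<bar>a * DV\<bar> > bound"
  proof -
    have "sgn (emp_resp_entropy p x ys - emp_resp_entropy p x' ys') = sgn DV" if "(ys, ys') \<in> G" for ys ys'
    proof -
      define DU where "DU = emp_resp_entropy p x ys - emp_resp_entropy p x' ys'"
      have k: "\<bar>DU - a * DV\<bar> \<le> bound" using key[OF that] unfolding DU_def .
      have "sgn DU = sgn DV"
      proof (cases "DV > 0")
        case True
        hence "a * DV > 0" using a_pos by simp
        hence "DU > 0" using k big bnd0 by linarith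
        thus ?thesis using True by simp
      next
        case False
        hence "DV < 0" using big bnd0 by (cases "DV = 0") auto
        hence "a * DV < 0" using a_pos by (simp add: mult_pos_neg)
        hence "DU < 0" using k big bnd0 by linarith
        thus ?thesis using \<open>DV < 0\<close> by simp
      qed
      thus ?thesis by (simp add: DU_def)
    qed
    hence "measure_pmf.prob R G \<le> measure_pmf.prob R
            {(ys, ys'). sgn (emp_resp_entropy p x ys - emp_resp_entropy p x' ys') = sgn DV}"
      by (intro measure_pmf.finite_measure_mono) auto
    thus ?thesis using PG by linarith
  qed
  show "let \<eta> = ln (real CARD('v)) * sqrt (ln (2 / \<alpha>) / (2 * real n));
         bound = 2 * \<epsilon> + 2 * (a + 1) * \<delta> + 2 * \<eta>;
         \<Delta>V = prompt_entropy p x - prompt_entropy p x';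
         R = pair_pmf (replicate_pmf n (q x)) (replicate_pmf n (q x'))
     in measure_pmf.prob R
          {(ys, ys'). \<bar>(emp_resp_entropy p x ys - emp_resp_entropy p x' ys') - a * \<Delta>V\<bar> \<le> bound}
          \<ge> 1 - 2 * \<alpha>
      \<and> (\<bar>a * \<Delta>V\<bar> > bound \<longrightarrow>
          measure_pmf.prob R
            {(ys, ys'). sgn (emp_resp_entropy p x ys - emp_resp_entropy p x' ys') = sgn \<Delta>V}
            \<ge> 1 - 2 * \<alpha>)"
    unfolding Let_def \<eta>_def[symmetric] bound_def[symmetric] DV_def[symmetric] R_def[symmetric]
    using part1 part2 by blast
qed

end
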